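(* Let $I\subseteq\mathbb{R}_-$ be a nonempty interval containing $0$ and let $f\colon I^n\to\mathbb{R}$. The following are equivalent: (i) $f$ is comonotonically modular; (ii) $f$ is invariant under horizontal max-differences; (iii) there exists $g\colon I^n\to\mathbb{R}$ such that for every $\sigma\in S_n$ and every $\mathbf{x}\in I^n_\sigma$, $$f(\mathbf{x})=g(\mathbf{0})+\sum_{i\in[n]}\Big(g\big(x_{\sigma(i)}\mathbf{1}_{A^\downarrow_\sigma(i)}\big)-g\big(x_{\sigma(i)}\mathbf{1}_{A^\downarrow_\sigma(i-1)}\big)\Big).$$ Moreover, in this case one can take $g=f$ in (iii).
   Context: Notation: $[n]=\{1,\ldots,n\}$; $S_n$ is the set of permutations of $[n]$; $\mathbf{1}_A$ is the indicator tuple of $A\subseteq[n]$, $\mathbf{0}=\mathbf{1}_\varnothing$. For $\sigma\in S_n$, $\mathbb{R}^n_\sigma=\{\mathbf{x}: x_{\sigma(1)}\leq\cdots\leq x_{\sigma(n)}\}$, $I^n_\sigma=I^n\cap\mathbb{R}^n_\sigma$, $A^\downarrow_\sigma(i)=\{\sigma(1),\ldots,\sigma(i)\}$, $A^\downarrow_\sigma(0)=\varnothing$. $\wedge,\vee$ denote componentwise min and max; $\mathbf{x}\vee c$ is the tuple with components $\max(x_i,c)$. Two tuples $\mathbf{x},\mathbf{x}'\in I^n$ are comonotonic if $\mathbf{x},\mathbf{x}'\in I^n_\sigma$ for some $\sigma\in S_n$. A function $f\colon I^n\to\mathbb{R}$ is comonotonically modular if $f(\mathbf{x})+f(\mathbf{x}')=f(\mathbf{x}\wedge\mathbf{x}')+f(\mathbf{x}\vee\mathbf{x}')$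 for all comonotonic $\mathbf{x},\mathbf{x}'\in I^n$. For $c\leq 0$, $[\mathbf{x}]^c$ is the tuple whose $i$th component is $0$ if $x_i\geq c$ and $x_i$ otherwise. For $I\subseteq\mathbb{R}_-$, $f$ is invariant under horizontal max-differences if $f(\mathbf{x})-f(\mathbf{x}\vee c)=f([\mathbf{x}]^c)-f([\mathbf{x}]^c\vee c)$ for all $\mathbf{x}\in I^n$, $c\in I$. *)

theory Defs
  imports "HOL-Analysis.Analysis"
begin

text \<open>n-tuples are functions on the index set {1..n}, extensional (undefined outside).\<close>

definition cube :: "real set \<Rightarrow> nat \<Rightarrow> (nat \<Rightarrow> real) set" where
  "cube I n = ({1..n} \<rightarrow>\<^sub>E I)"

definition in_sector :: "nat \<Rightarrow> (nat \<Rightarrow> nat) \<Rightarrow> (nat \<Rightarrow> real) \<Rightarrow> bool" where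
  "in_sector n \<sigma> x = (\<forall>i j. 1 \<le> i \<and> i \<le> j \<and> j \<le> n \<longrightarrow> x (\<sigma> i) \<le> x (\<sigma> j))"

definition comonotonic :: "real set \<Rightarrow> nat \<Rightarrow> (nat \<Rightarrow> real) \<Rightarrow> (nat \<Rightarrow> real) \<Rightarrow> bool" where
  "comonotonic I n x x' = (x \<in> cube I n \<and> x' \<in> cube I n \<and>
     (\<exists>\<sigma>. \<sigma> permutes {1..n} \<and> in_sector n \<sigma> x \<and> in_sector n \<sigma> x'))"

definition vmin :: "nat \<Rightarrow> (nat \<Rightarrow> real) \<Rightarrow> (nat \<Rightarrow> real) \<Rightarrow> (nat \<Rightarrow> real)" where
  "vmin n x y = restrict (\<lambda>i. min (x i) (y i)) {1..n}"

definition vmax :: "nat \<Rightarrow> (nat \<Rightarrow> real) \<Rightarrow> (nat \<Rightarrow> real) \<Rightarrow> (nat \<Rightarrow> real)" where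
  "vmax n x y = restrict (\<lambda>i. max (x i) (y i)) {1..n}"

definition vmaxc :: "nat \<Rightarrow> (nat \<Rightarrow> real) \<Rightarrow> real \<Rightarrow> (nat \<Rightarrow> real)" where
  "vmaxc n x c = restrict (\<lambda>i. max (x i) c) {1..n}"

definition cutc :: "nat \<Rightarrow> real \<Rightarrow> (nat \<Rightarrow> real) \<Rightarrow> (nat \<Rightarrow> real)" where
  "cutc n c x = restrict (\<lambda>i. if x i \<ge> c then 0 else x i) {1..n}"

definition ind :: "nat \<Rightarrow> nat set \<Rightarrow> (nat \<Rightarrow> real)" where
  "ind n A = restrict (\<lambda>i. if i \<in> A then 1 else 0) {1..n}"

definition smul :: "nat \<Rightarrow> real \<Rightarrow> (nat \<Rightarrow> real) \<Rightarrow> (nat \<Rightarrow> real)" where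
  "smul n c x = restrict (\<lambda>i. c * x i) {1..n}"

definition Adown :: "(nat \<Rightarrow> nat) \<Rightarrow> nat \<Rightarrow> nat set" where
  "Adown \<sigma> i = \<sigma> ` {1..i}"

definition comonotonically_modular :: "real set \<Rightarrow> nat \<Rightarrow> ((nat \<Rightarrow> real) \<Rightarrow> real) \<Rightarrow> bool" where
  "comonotonically_modular I n f = (\<forall>x x'. comonotonic I n x x' \<longrightarrow>
      f x + f x' = f (vmin n x x') + f (vmax n x x'))"

definition invariant_hmd :: "real set \<Rightarrow> nat \<Rightarrow> ((nat \<Rightarrow> real) \<Rightarrow> real) \<Rightarrow> bool" where
  "invariant_hmd I n f = (\<forall>x \<in> cube I n. \<forall>c \<in> I.
      f x - f (vmaxc n x c) = f (cutc n c x) - f (vmaxc n (cutc n c x) c))"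

definition rep_formula :: "real set \<Rightarrow> nat \<Rightarrow> ((nat \<Rightarrow> real) \<Rightarrow> real) \<Rightarrow> ((nat \<Rightarrow> real) \<Rightarrow> real) \<Rightarrow> bool" where
  "rep_formula I n f g = (\<forall>\<sigma>. \<sigma> permutes {1..n} \<longrightarrow> (\<forall>x \<in> cube I n. in_sector n \<sigma> x \<longrightarrow>
      f x = g (ind n {}) + (\<Sum>i = 1..n.
         g (smul n (x (\<sigma> i)) (ind n (Adown \<sigma> i))) - g (smul n (x (\<sigma> i)) (ind n (Adown \<sigma> (i - 1)))))))"

end

theory Submission
  imports Defs
begin

lemma sort_perm_exists:
  fixes x :: "nat \<Rightarrow> real"
  shows "\<exists>\<sigma>. \<sigma> permutes {1..n} \<and> in_sector n \<sigma> x"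
proof -
  define L where "L = sort_key x [1..<Suc n]"
  have lenL: "length L = n" and setL: "set L = {1..n}" and dL: "distinct L"
    and sL: "sorted (map x L)" by (auto simp: L_def)
  define \<sigma> where "\<sigma> = (\<lambda>i. if i \<in> {1..n} then L ! (i - 1) else i)"
  have inj: "inj_on \<sigma> {1..n}"
  proof (rule inj_onI)
    fix i j assume i: "i \<in> {1..n}" and j: "j \<in> {1..n}" and e: "\<sigma> i = \<sigma> j"
    then have "L ! (i - 1) = L ! (j - 1)" by (simp add: \<sigma>_def)
    with dL lenL i j have "i - 1 = j - 1" using nth_eq_iff_index_eq[OF dL, of "i - 1" "j - 1"] by auto
    with i j show "i = j" by auto
  qed
  have sub: "\<sigma> ` {1..n} \<subseteq> {1..n}"
  proof
    fix y assume "y \<in> \<sigma> ` {1..n}"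
    then obtain i where i: "i \<in> {1..n}" and y: "y = L ! (i - 1)" by (auto simp: \<sigma>_def)
    have "L ! (i - 1) \<in> set L" using i lenL by (intro nth_mem) auto
    with y setL show "y \<in> {1..n}" by simp
  qed
  have "\<sigma> ` {1..n} = {1..n}" using endo_inj_surj[OF _ sub inj] by simp
  with inj have "bij_betw \<sigma> {1..n} {1..n}" by (simp add: bij_betw_def)
  then have perm: "\<sigma> permutes {1..n}" by (rule bij_imp_permutes) (auto simp: \<sigma>_def)
  have "in_sector n \<sigma> x"
    unfolding in_sector_def
  proof (intro allI impI)
    fix i j :: nat assume h: "1 \<le> i \<and> i \<le> j \<and> j \<le> n"
    have "map x L ! (i - 1) \<le> map x L ! (j - 1)"
      using h lenL by (intro sorted_nth_mono[OF sL]) auto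
    moreover have "map x L ! (i - 1) = x (L ! (i - 1))" using h lenL by (intro nth_map) auto
    moreover have "map x L ! (j - 1) = x (L ! (j - 1))" using h lenL by (intro nth_map) auto
    ultimately show "x (\<sigma> i) \<le> x (\<sigma> j)" using h by (simp add: \<sigma>_def)
  qed
  with perm show ?thesis by blast
qed


lemma cube_ext: "x \<in> cube I n \<Longrightarrow> x \<in> extensional {1..n}"
  by (auto simp: cube_def PiE_iff)

lemma cube_iff: "x \<in> cube I n \<longleftrightarrow> x \<in> extensional {1..n} \<and> (\<forall>i\<in>{1..n}. x i \<in> I)"
  by (auto simp: cube_def PiE_iff)

context
  fixes I :: "real set" and n :: nat and \<sigma> :: "nat \<Rightarrow> nat"
  assumes I0: "I \<subseteq> {..0}" and perm: "\<sigma> permutes {1..n}"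
begin

lemma sig_in: "j \<in> {1..n} \<Longrightarrow> \<sigma> j \<in> {1..n}"
  using permutes_in_image[OF perm] by blast

lemma sig_ex: "i \<in> {1..n} \<Longrightarrow> \<exists>j\<in>{1..n}. i = \<sigma> j"
  using permutes_image[OF perm] by blast

lemma Adown_mem: "\<sigma> j \<in> Adown \<sigma> k \<longleftrightarrow> j \<in> {1..k}"
  unfolding Adown_def using permutes_inj[OF perm] by (simp add: inj_image_mem_iff)

lemma eq_on:
  assumes "F \<in> extensional {1..n}" "G \<in> extensional {1..n}"
    and "\<And>j. j \<in> {1..n} \<Longrightarrow> F (\<sigma> j) = G (\<sigma> j)"
  shows "F = G"
proof (rule extensionalityI[OF assms(1,2)])
  fix i assume "i \<in> {1..n}"
  then obtain j where "j \<in> {1..n}" "i = \<sigma> j" using sig_ex by blast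
  then show "F i = G i" using assms(3) by simp
qed

lemma vmaxc_at: "j \<in> {1..n} \<Longrightarrow> vmaxc n F c (\<sigma> j) = max (F (\<sigma> j)) c"
  using sig_in[of j] by (simp add: vmaxc_def)
lemma vmin_at: "j \<in> {1..n} \<Longrightarrow> vmin n F G (\<sigma> j) = min (F (\<sigma> j)) (G (\<sigma> j))"
  using sig_in[of j] by (simp add: vmin_def)
lemma vmax_at: "j \<in> {1..n} \<Longrightarrow> vmax n F G (\<sigma> j) = max (F (\<sigma> j)) (G (\<sigma> j))"
  using sig_in[of j] by (simp add: vmax_def)
lemma cutc_at: "j \<in> {1..n} \<Longrightarrow> cutc n c F (\<sigma> j) = (if F (\<sigma> j) \<ge> c then 0 else F (\<sigma> j))"
  using sig_in[of j] by (simp add: cutc_def)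
lemma smul_at: "j \<in> {1..n} \<Longrightarrow> smul n c (ind n (Adown \<sigma> k)) (\<sigma> j) = (if j \<le> k then c else 0)"
  using sig_in[of j] Adown_mem[of j k] by (auto simp: smul_def ind_def)

lemma ext_simps: "vmaxc n F c \<in> extensional {1..n}" "vmin n F G \<in> extensional {1..n}"
  "vmax n F G \<in> extensional {1..n}" "cutc n c F \<in> extensional {1..n}"
  "smul n c H \<in> extensional {1..n}"
  by (simp_all add: vmaxc_def vmin_def vmax_def cutc_def smul_def)

lemma sector_iff: "in_sector n \<sigma> F \<longleftrightarrow> (\<forall>p q. 1 \<le> p \<and> p \<le> q \<and> q \<le> n \<longrightarrow> F (\<sigma> p) \<le> F (\<sigma> q))"
  by (simp add: in_sector_def)

lemma cube_on: "F \<in> cube I n \<longleftrightarrow> F \<in> extensional {1..n} \<and> (\<forall>j\<in>{1..n}. F (\<sigma> j) \<in> I)"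
  unfolding cube_iff using sig_in sig_ex by blast


lemma a_le: "x \<in> cube I n \<Longrightarrow> in_sector n \<sigma> x \<Longrightarrow> 1 \<le> p \<Longrightarrow> p \<le> q \<Longrightarrow> q \<le> n \<Longrightarrow> x (\<sigma> p) \<le> x (\<sigma> q)"
  by (simp add: in_sector_def)

lemma a_I: "x \<in> cube I n \<Longrightarrow> j \<in> {1..n} \<Longrightarrow> x (\<sigma> j) \<in> I"
  using cube_on[of x] by blast

lemma a_np: "x \<in> cube I n \<Longrightarrow> j \<in> {1..n} \<Longrightarrow> x (\<sigma> j) \<le> 0"
  using a_I[of x j] I0 by auto

lemma rep_rec:
  fixes f :: "(nat \<Rightarrow> real) \<Rightarrow> real"
  assumes xc: "x \<in> cube I n" and xs: "in_sector n \<sigma> x"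
  and rec: "\<And>k. 1 \<le> k \<Longrightarrow> k < n \<Longrightarrow> f (vmaxc n x (x (\<sigma> k))) - f (vmaxc n x (x (\<sigma> (Suc k))))
      = f (smul n (x (\<sigma> k)) (ind n (Adown \<sigma> k))) - f (smul n (x (\<sigma> (Suc k))) (ind n (Adown \<sigma> k)))"
  shows "f x = f (ind n {}) + (\<Sum>i = 1..n.
         f (smul n (x (\<sigma> i)) (ind n (Adown \<sigma> i))) - f (smul n (x (\<sigma> i)) (ind n (Adown \<sigma> (i - 1)))))"
proof (cases "n = 0")
  case True
  then have "x \<in> extensional {}" using cube_ext[OF xc] by simp
  then have "x = (\<lambda>_. undefined)" by (simp add: extensional_empty)
  then show ?thesis using True by (simp add: ind_def restrict_def)
next
  case False
  define u where "u k = vmaxc n x (x (\<sigma> k))" for k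
  define y where "y k = smul n (x (\<sigma> k)) (ind n (Adown \<sigma> k))" for k
  define w where "w k = smul n (x (\<sigma> k)) (ind n (Adown \<sigma> (k - 1)))" for k
  have xe: "x \<in> extensional {1..n}" using cube_ext[OF xc] .
  have un: "u n = y n" unfolding u_def y_def
  proof (rule eq_on)
    fix j assume j: "j \<in> {1..n}"
    have "x (\<sigma> j) \<le> x (\<sigma> n)" using a_le[OF xc xs, of j n] j by auto
    then show "vmaxc n x (x (\<sigma> n)) (\<sigma> j) = smul n (x (\<sigma> n)) (ind n (Adown \<sigma> n)) (\<sigma> j)"
      using j by (simp add: vmaxc_at smul_at)
  qed (rule ext_simps)+
  have u1: "u 1 = x" unfolding u_def
  proof (rule eq_on)
    fix j assume j: "j \<in> {1..n}"
    have "x (\<sigma> 1) \<le> x (\<sigma> j)" using a_le[OF xc xs, of 1 j] j by auto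
    then show "vmaxc n x (x (\<sigma> 1)) (\<sigma> j) = x (\<sigma> j)"
      using j by (simp add: vmaxc_at)
  qed (rule ext_simps xe)+
  have w1: "w 1 = ind n {}" unfolding w_def
    by (auto simp: Adown_def smul_def ind_def restrict_def fun_eq_iff)
  have P: "f (u k) = f (w k) + (\<Sum>i=k..n. f (y i) - f (w i))" if k: "1 \<le> k" "k \<le> n" for k
    using k(2) k(1)
  proof (induction k rule: inc_induct)
    case base
    then show ?case using un by simp
  next
    case (step m)
    have r: "f (u m) - f (u (Suc m)) = f (y m) - f (w (Suc m))"
      using rec[of m] step by (simp add: u_def y_def w_def)
    have "(\<Sum>i=m..n. f (y i) - f (w i)) = (f (y m) - f (w m)) + (\<Sum>i=Suc m..n. f (y i) - f (w i))"
      using step by (intro sum.atLeast_Suc_atMost) simp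
    then show ?case using step r by simp
  qed
  from P[of 1] False have "f (u 1) = f (w 1) + (\<Sum>i=1..n. f (y i) - f (w i))" by simp
  then show ?thesis using u1 w1 by (simp add: y_def w_def)
qed


lemma rep_at:
  fixes f g :: "(nat \<Rightarrow> real) \<Rightarrow> real"
  assumes R: "rep_formula I n f g" and zc: "z \<in> cube I n" and zs: "in_sector n \<sigma> z"
    and h: "\<And>j. j \<in> {1..n} \<Longrightarrow> z (\<sigma> j) = h j"
  shows "f z = g (ind n {}) + (\<Sum>i = 1..n.
         g (smul n (h i) (ind n (Adown \<sigma> i))) - g (smul n (h i) (ind n (Adown \<sigma> (i - 1)))))"
proof -
  have "f z = g (ind n {}) + (\<Sum>i = 1..n.
         g (smul n (z (\<sigma> i)) (ind n (Adown \<sigma> i))) - g (smul n (z (\<sigma> i)) (ind n (Adown \<sigma> (i - 1)))))"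
    using R perm zc zs unfolding rep_formula_def by blast
  also have "\<dots> = g (ind n {}) + (\<Sum>i = 1..n.
         g (smul n (h i) (ind n (Adown \<sigma> i))) - g (smul n (h i) (ind n (Adown \<sigma> (i - 1)))))"
    using h by (intro arg_cong2[where f="(+)"] refl sum.cong) auto
  finally show ?thesis .
qed

lemma rec_from_cm:
  fixes f :: "(nat \<Rightarrow> real) \<Rightarrow> real"
  assumes zI: "0 \<in> I" and cm: "comonotonically_modular I n f"
    and xc: "x \<in> cube I n" and xs: "in_sector n \<sigma> x" and k: "1 \<le> k" "k < n"
  shows "f (vmaxc n x (x (\<sigma> k))) - f (vmaxc n x (x (\<sigma> (Suc k))))
      = f (smul n (x (\<sigma> k)) (ind n (Adown \<sigma> k))) - f (smul n (x (\<sigma> (Suc k))) (ind n (Adown \<sigma> k)))"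
proof -
  have mono: "\<And>p q. 1 \<le> p \<Longrightarrow> p \<le> q \<Longrightarrow> q \<le> n \<Longrightarrow> x (\<sigma> p) \<le> x (\<sigma> q)"
    using a_le[OF xc xs] by blast
  have np: "\<And>j. j \<in> {1..n} \<Longrightarrow> x (\<sigma> j) \<le> 0" using a_np[OF xc] by blast
  have aI: "\<And>j. j \<in> {1..n} \<Longrightarrow> x (\<sigma> j) \<in> I" using a_I[OF xc] by blast
  define y where "y = smul n (x (\<sigma> k)) (ind n (Adown \<sigma> k))"
  define U where "U = vmaxc n x (x (\<sigma> (Suc k)))"
  have yc: "y \<in> cube I n" unfolding cube_on y_def
    using ext_simps aI[of k] k zI by (auto simp: smul_at)
  have Uc: "U \<in> cube I n" unfolding cube_on U_def
    using ext_simps aI[of "Suc k"] k aI by (auto simp: vmaxc_at max_def)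
  have ys: "in_sector n \<sigma> y" unfolding sector_iff y_def
    using np[of k] k by (auto simp: smul_at)
  have Us: "in_sector n \<sigma> U" unfolding sector_iff U_def
  proof (intro allI impI)
    fix p q assume pq: "1 \<le> p \<and> p \<le> q \<and> q \<le> n"
    then show "vmaxc n x (x (\<sigma> (Suc k))) (\<sigma> p) \<le> vmaxc n x (x (\<sigma> (Suc k))) (\<sigma> q)"
      using mono[of p q] by (simp add: vmaxc_at)
  qed
  have co: "comonotonic I n y U" unfolding comonotonic_def using yc Uc ys Us perm by blast
  have mn: "vmin n y U = vmaxc n x (x (\<sigma> k))"
  proof (rule eq_on)
    fix j assume j: "j \<in> {1..n}"
    show "vmin n y U (\<sigma> j) = vmaxc n x (x (\<sigma> k)) (\<sigma> j)"
    proof (cases "j \<le> k")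
      case True
      then show ?thesis using j k mono[of j k] mono[of k "Suc k"]
        by (simp add: vmin_at vmaxc_at y_def U_def smul_at)
    next
      case False
      then show ?thesis using j k mono[of "Suc k" j] mono[of k j] np[of j]
        by (simp add: vmin_at vmaxc_at y_def U_def smul_at)
    qed
  qed (rule ext_simps)+
  have mx: "vmax n y U = smul n (x (\<sigma> (Suc k))) (ind n (Adown \<sigma> k))"
  proof (rule eq_on)
    fix j assume j: "j \<in> {1..n}"
    show "vmax n y U (\<sigma> j) = smul n (x (\<sigma> (Suc k))) (ind n (Adown \<sigma> k)) (\<sigma> j)"
    proof (cases "j \<le> k")
      case True
      then show ?thesis using j k mono[of j k] mono[of k "Suc k"]
        by (simp add: vmax_at vmaxc_at y_def U_def smul_at)
    next
      case False
      then show ?thesis using j k mono[of "Suc k" j] np[of j]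
        by (simp add: vmax_at vmaxc_at y_def U_def smul_at)
    qed
  qed (rule ext_simps)+
  have "f y + f U = f (vmin n y U) + f (vmax n y U)"
    using cm co unfolding comonotonically_modular_def by blast
  then show ?thesis using mn mx by (simp add: y_def U_def)
qed


lemma rec_from_hmd:
  fixes f :: "(nat \<Rightarrow> real) \<Rightarrow> real"
  assumes hm: "invariant_hmd I n f"
    and xc: "x \<in> cube I n" and xs: "in_sector n \<sigma> x" and k: "1 \<le> k" "k < n"
  shows "f (vmaxc n x (x (\<sigma> k))) - f (vmaxc n x (x (\<sigma> (Suc k))))
      = f (smul n (x (\<sigma> k)) (ind n (Adown \<sigma> k))) - f (smul n (x (\<sigma> (Suc k))) (ind n (Adown \<sigma> k)))"
proof -
  have mono: "\<And>p q. 1 \<le> p \<Longrightarrow> p \<le> q \<Longrightarrow> q \<le> n \<Longrightarrow> x (\<sigma> p) \<le> x (\<sigma> q)"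
    using a_le[OF xc xs] by blast
  have np: "\<And>j. j \<in> {1..n} \<Longrightarrow> x (\<sigma> j) \<le> 0" using a_np[OF xc] by blast
  have aI: "\<And>j. j \<in> {1..n} \<Longrightarrow> x (\<sigma> j) \<in> I" using a_I[OF xc] by blast
  have kk: "x (\<sigma> k) \<le> x (\<sigma> (Suc k))" using mono[of k "Suc k"] k by simp
  show ?thesis
  proof (cases "x (\<sigma> k) = x (\<sigma> (Suc k))")
    case True
    then show ?thesis by simp
  next
    case False
    with kk have lt: "x (\<sigma> k) < x (\<sigma> (Suc k))" by simp
    define c where "c = x (\<sigma> (Suc k))"
    define U where "U = vmaxc n x (x (\<sigma> k))"
    have cI: "c \<in> I" using aI[of "Suc k"] k by (simp add: c_def)
    have Uc: "U \<in> cube I n" unfolding cube_on U_def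
      using ext_simps aI[of k] k aI by (auto simp: vmaxc_at max_def)
    have e1: "vmaxc n U c = vmaxc n x (x (\<sigma> (Suc k)))"
    proof (rule eq_on)
      fix j assume j: "j \<in> {1..n}"
      show "vmaxc n U c (\<sigma> j) = vmaxc n x (x (\<sigma> (Suc k))) (\<sigma> j)"
        using j kk by (simp add: vmaxc_at U_def c_def)
    qed (rule ext_simps)+
    have e2: "cutc n c U = smul n (x (\<sigma> k)) (ind n (Adown \<sigma> k))"
    proof (rule eq_on)
      fix j assume j: "j \<in> {1..n}"
      show "cutc n c U (\<sigma> j) = smul n (x (\<sigma> k)) (ind n (Adown \<sigma> k)) (\<sigma> j)"
      proof (cases "j \<le> k")
        case True
        then show ?thesis using j k mono[of j k] lt
          by (simp add: cutc_at vmaxc_at smul_at U_def c_def)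
      next
        case False
        then show ?thesis using j k mono[of "Suc k" j] mono[of k j]
          by (simp add: cutc_at vmaxc_at smul_at U_def c_def)
      qed
    qed (rule ext_simps)+
    have e3: "vmaxc n (smul n (x (\<sigma> k)) (ind n (Adown \<sigma> k))) c
        = smul n (x (\<sigma> (Suc k))) (ind n (Adown \<sigma> k))"
    proof (rule eq_on)
      fix j assume j: "j \<in> {1..n}"
      show "vmaxc n (smul n (x (\<sigma> k)) (ind n (Adown \<sigma> k))) c (\<sigma> j)
        = smul n (x (\<sigma> (Suc k))) (ind n (Adown \<sigma> k)) (\<sigma> j)"
        using j kk np[of "Suc k"] k by (simp add: vmaxc_at smul_at c_def)
    qed (rule ext_simps)+
    have "f U - f (vmaxc n U c) = f (cutc n c U) - f (vmaxc n (cutc n c U) c)"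
      using hm Uc cI unfolding invariant_hmd_def by blast
    then show ?thesis using e1 e2 e3 by (simp add: U_def)
  qed
qed


lemma cm_from_rep:
  fixes f g :: "(nat \<Rightarrow> real) \<Rightarrow> real"
  assumes R: "rep_formula I n f g" and I: "is_interval I"
    and xc: "x \<in> cube I n" and xs: "in_sector n \<sigma> x"
    and xc': "x' \<in> cube I n" and xs': "in_sector n \<sigma> x'"
  shows "f x + f x' = f (vmin n x x') + f (vmax n x x')"
proof -
  define G where "G i t = g (smul n t (ind n (Adown \<sigma> i))) - g (smul n t (ind n (Adown \<sigma> (i - 1))))" for i t
  have aI: "\<And>j. j \<in> {1..n} \<Longrightarrow> x (\<sigma> j) \<in> I" using a_I[OF xc] by blast
  have aI': "\<And>j. j \<in> {1..n} \<Longrightarrow> x' (\<sigma> j) \<in> I" using a_I[OF xc'] by blast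
  have c1: "vmin n x x' \<in> cube I n" unfolding cube_on
    using ext_simps aI aI' by (auto simp: vmin_at min_def)
  have c2: "vmax n x x' \<in> cube I n" unfolding cube_on
    using ext_simps aI aI' by (auto simp: vmax_at max_def)
  have s1: "in_sector n \<sigma> (vmin n x x')" unfolding sector_iff
  proof (intro allI impI)
    fix p q assume pq: "1 \<le> p \<and> p \<le> q \<and> q \<le> n"
    then show "vmin n x x' (\<sigma> p) \<le> vmin n x x' (\<sigma> q)"
      using a_le[OF xc xs, of p q] a_le[OF xc' xs', of p q] by (auto simp: vmin_at min_le_iff_disj)
  qed
  have s2: "in_sector n \<sigma> (vmax n x x')" unfolding sector_iff
  proof (intro allI impI)
    fix p q assume pq: "1 \<le> p \<and> p \<le> q \<and> q \<le> n"
    then show "vmax n x x' (\<sigma> p) \<le> vmax n x x' (\<sigma> q)"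
      using a_le[OF xc xs, of p q] a_le[OF xc' xs', of p q] by (auto simp: vmax_at le_max_iff_disj)
  qed
  have f1: "f x = g (ind n {}) + (\<Sum>i=1..n. G i (x (\<sigma> i)))"
    using rep_at[OF R xc xs, of "\<lambda>j. x (\<sigma> j)"] by (simp add: G_def)
  have f2: "f x' = g (ind n {}) + (\<Sum>i=1..n. G i (x' (\<sigma> i)))"
    using rep_at[OF R xc' xs', of "\<lambda>j. x' (\<sigma> j)"] by (simp add: G_def)
  have f3: "f (vmin n x x') = g (ind n {}) + (\<Sum>i=1..n. G i (min (x (\<sigma> i)) (x' (\<sigma> i))))"
    using rep_at[OF R c1 s1, of "\<lambda>j. min (x (\<sigma> j)) (x' (\<sigma> j))"] by (simp add: G_def vmin_at)
  have f4: "f (vmax n x x') = g (ind n {}) + (\<Sum>i=1..n. G i (max (x (\<sigma> i)) (x' (\<sigma> i))))"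
    using rep_at[OF R c2 s2, of "\<lambda>j. max (x (\<sigma> j)) (x' (\<sigma> j))"] by (simp add: G_def vmax_at)
  have pw: "G i a + G i b = G i (min a b) + G i (max a b)" for i a b
    by (cases "a \<le> b") (simp_all add: min_def max_def)
  have "(\<Sum>i=1..n. G i (x (\<sigma> i))) + (\<Sum>i=1..n. G i (x' (\<sigma> i)))
      = (\<Sum>i=1..n. G i (min (x (\<sigma> i)) (x' (\<sigma> i)))) + (\<Sum>i=1..n. G i (max (x (\<sigma> i)) (x' (\<sigma> i))))"
    unfolding sum.distrib[symmetric] by (rule sum.cong[OF refl]) (rule pw)
  then show ?thesis using f1 f2 f3 f4 by linarith
qed

lemma hmd_from_rep:
  fixes f g :: "(nat \<Rightarrow> real) \<Rightarrow> real"
  assumes R: "rep_formula I n f g" and I: "is_interval I" and zI: "0 \<in> I"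
    and xc: "x \<in> cube I n" and xs: "in_sector n \<sigma> x" and cI: "c \<in> I"
  shows "f x - f (vmaxc n x c) = f (cutc n c x) - f (vmaxc n (cutc n c x) c)"
proof -
  define G where "G i t = g (smul n t (ind n (Adown \<sigma> i))) - g (smul n t (ind n (Adown \<sigma> (i - 1))))" for i t
  have aI: "\<And>j. j \<in> {1..n} \<Longrightarrow> x (\<sigma> j) \<in> I" using a_I[OF xc] by blast
  have np: "\<And>j. j \<in> {1..n} \<Longrightarrow> x (\<sigma> j) \<le> 0" using a_np[OF xc] by blast
  have c0: "c \<le> 0" using cI I0 by auto
  have mono: "\<And>p q. 1 \<le> p \<Longrightarrow> p \<le> q \<Longrightarrow> q \<le> n \<Longrightarrow> x (\<sigma> p) \<le> x (\<sigma> q)"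
    using a_le[OF xc xs] by blast
  have c1: "vmaxc n x c \<in> cube I n" unfolding cube_on
    using ext_simps aI cI by (auto simp: vmaxc_at max_def)
  have c2: "cutc n c x \<in> cube I n" unfolding cube_on
    using ext_simps aI zI by (auto simp: cutc_at)
  have c3: "vmaxc n (cutc n c x) c \<in> cube I n" unfolding cube_on
    using ext_simps aI zI cI by (auto simp: vmaxc_at cutc_at max_def)
  have s1: "in_sector n \<sigma> (vmaxc n x c)" unfolding sector_iff
  proof (intro allI impI)
    fix p q assume pq: "1 \<le> p \<and> p \<le> q \<and> q \<le> n"
    then show "vmaxc n x c (\<sigma> p) \<le> vmaxc n x c (\<sigma> q)"
      using mono[of p q] by (simp add: vmaxc_at)
  qed
  have cut_mono: "cutc n c x (\<sigma> p) \<le> cutc n c x (\<sigma> q)" if pq: "1 \<le> p \<and> p \<le> q \<and> q \<le> n" for p q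
    using pq mono[of p q] np[of p] np[of q] by (simp add: cutc_at)
  have s2: "in_sector n \<sigma> (cutc n c x)" unfolding sector_iff using cut_mono by blast
  have s3: "in_sector n \<sigma> (vmaxc n (cutc n c x) c)" unfolding sector_iff
  proof (intro allI impI)
    fix p q assume pq: "1 \<le> p \<and> p \<le> q \<and> q \<le> n"
    then show "vmaxc n (cutc n c x) c (\<sigma> p) \<le> vmaxc n (cutc n c x) c (\<sigma> q)"
      using cut_mono[OF pq] pq by (simp add: vmaxc_at del: cutc_at)
  qed
  have f1: "f x = g (ind n {}) + (\<Sum>i=1..n. G i (x (\<sigma> i)))"
    using rep_at[OF R xc xs, of "\<lambda>j. x (\<sigma> j)"] by (simp add: G_def)
  have f2: "f (vmaxc n x c) = g (ind n {}) + (\<Sum>i=1..n. G i (max (x (\<sigma> i)) c))"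
    using rep_at[OF R c1 s1, of "\<lambda>j. max (x (\<sigma> j)) c"] by (simp add: G_def vmaxc_at)
  have f3: "f (cutc n c x) = g (ind n {}) + (\<Sum>i=1..n. G i (if x (\<sigma> i) \<ge> c then 0 else x (\<sigma> i)))"
    using rep_at[OF R c2 s2, of "\<lambda>j. if x (\<sigma> j) \<ge> c then 0 else x (\<sigma> j)"] by (simp add: G_def cutc_at)
  have f4: "f (vmaxc n (cutc n c x) c) = g (ind n {}) + (\<Sum>i=1..n. G i (max (if x (\<sigma> i) \<ge> c then 0 else x (\<sigma> i)) c))"
    using rep_at[OF R c3 s3, of "\<lambda>j. max (if x (\<sigma> j) \<ge> c then 0 else x (\<sigma> j)) c"]
    by (simp add: G_def cutc_at vmaxc_at)
  have pw: "G i a - G i (max a c) = G i (if a \<ge> c then 0 else a) - G i (max (if a \<ge> c then 0 else a) c)" for i a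
    using c0 by (cases "a \<ge> c") (simp_all add: max_def)
  have "(\<Sum>i=1..n. G i (x (\<sigma> i))) - (\<Sum>i=1..n. G i (max (x (\<sigma> i)) c))
      = (\<Sum>i=1..n. G i (if x (\<sigma> i) \<ge> c then 0 else x (\<sigma> i))) - (\<Sum>i=1..n. G i (max (if x (\<sigma> i) \<ge> c then 0 else x (\<sigma> i)) c))"
    unfolding sum_subtractf[symmetric] by (rule sum.cong[OF refl]) (rule pw)
  then show ?thesis using f1 f2 f3 f4 by linarith
qed

end


lemma R_of_cm:
  fixes f :: "(nat \<Rightarrow> real) \<Rightarrow> real"
  assumes I0: "I \<subseteq> {..0}" and zI: "0 \<in> I" and cm: "comonotonically_modular I n f"
  shows "rep_formula I n f f"
  unfolding rep_formula_def
proof (intro allI impI ballI)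
  fix \<sigma> x assume perm: "\<sigma> permutes {1..n}" and xc: "x \<in> cube I n" and xs: "in_sector n \<sigma> x"
  show "f x = f (ind n {}) + (\<Sum>i = 1..n.
         f (smul n (x (\<sigma> i)) (ind n (Adown \<sigma> i))) - f (smul n (x (\<sigma> i)) (ind n (Adown \<sigma> (i - 1)))))"
    by (rule rep_rec[OF I0 perm xc xs]) (rule rec_from_cm[OF I0 perm zI cm xc xs])
qed

lemma R_of_hmd:
  fixes f :: "(nat \<Rightarrow> real) \<Rightarrow> real"
  assumes I0: "I \<subseteq> {..0}" and hm: "invariant_hmd I n f"
  shows "rep_formula I n f f"
  unfolding rep_formula_def
proof (intro allI impI ballI)
  fix \<sigma> x assume perm: "\<sigma> permutes {1..n}" and xc: "x \<in> cube I n" and xs: "in_sector n \<sigma> x"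
  show "f x = f (ind n {}) + (\<Sum>i = 1..n.
         f (smul n (x (\<sigma> i)) (ind n (Adown \<sigma> i))) - f (smul n (x (\<sigma> i)) (ind n (Adown \<sigma> (i - 1)))))"
    by (rule rep_rec[OF I0 perm xc xs]) (rule rec_from_hmd[OF I0 perm hm xc xs])
qed

lemma cm_of_R:
  fixes f g :: "(nat \<Rightarrow> real) \<Rightarrow> real"
  assumes I0: "I \<subseteq> {..0}" and I: "is_interval I" and R: "rep_formula I n f g"
  shows "comonotonically_modular I n f"
  unfolding comonotonically_modular_def
proof (intro allI impI)
  fix x x' assume "comonotonic I n x x'"
  then obtain \<sigma> where perm: "\<sigma> permutes {1..n}" and xc: "x \<in> cube I n" and xc': "x' \<in> cube I n"
    and xs: "in_sector n \<sigma> x" and xs': "in_sector n \<sigma> x'"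
    unfolding comonotonic_def by blast
  show "f x + f x' = f (vmin n x x') + f (vmax n x x')"
    by (rule cm_from_rep[OF I0 perm R I xc xs xc' xs'])
qed

lemma hmd_of_R:
  fixes f g :: "(nat \<Rightarrow> real) \<Rightarrow> real"
  assumes I0: "I \<subseteq> {..0}" and I: "is_interval I" and zI: "0 \<in> I" and R: "rep_formula I n f g"
  shows "invariant_hmd I n f"
  unfolding invariant_hmd_def
proof (intro ballI)
  fix x c assume xc: "x \<in> cube I n" and cI: "c \<in> I"
  obtain \<sigma> where perm: "\<sigma> permutes {1..n}" and xs: "in_sector n \<sigma> x"
    using sort_perm_exists by blast
  show "f x - f (vmaxc n x c) = f (cutc n c x) - f (vmaxc n (cutc n c x) c)"
    by (rule hmd_from_rep[OF I0 perm R I zI xc xs cI])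
qed

theorem theorem10:
  fixes I :: "real set" and n :: nat and f :: "(nat \<Rightarrow> real) \<Rightarrow> real"
  assumes "is_interval I" and "I \<subseteq> {..0}" and "0 \<in> I"
  shows "(comonotonically_modular I n f \<longleftrightarrow> invariant_hmd I n f)
       \<and> (invariant_hmd I n f \<longleftrightarrow> (\<exists>g. rep_formula I n f g))
       \<and> (comonotonically_modular I n f \<longrightarrow> rep_formula I n f f)"
  using R_of_cm[OF assms(2,3)] R_of_hmd[OF assms(2)] cm_of_R[OF assms(2,1)]
    hmd_of_R[OF assms(2,1,3)] by blast

end
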